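(* Let $X=(X_n:n\ge 0)$ be an irreducible positive recurrent Markov chain on a countable state space $S$ with transition matrix $P$. Let $K\subseteq A\subseteq S$ with $K$ finite and nonempty and $A$ finite, and put $A'=A\setminus K$. Write $P$ in block form with respect to the partition $(K,A',A^c)$ as $P=\begin{pmatrix}P_{11}&P_{12}&P_{13}\\P_{21}&P_{22}&P_{23}\\P_{31}&P_{32}&P_{33}\end{pmatrix}$ (the matrix $I-P_{22}$ is invertible under these hypotheses). Let $B=\begin{pmatrix}P_{22}&P_{23}\\P_{32}&P_{33}\end{pmatrix}$ be the restriction of $P$ to $K^c=A'\cup A^c$. For a non-negative function $w:S\to[0,\infty)$, written as a column vector in block form $w^T=(w_1^T,w_2^T,w_3^T)$, put $\bar w^T=(w_2^T,w_3^T)$ and write $\sum_{n=0}^\infty B^n\bar w=\begin{pmatrix}\eta'(\bar w)\\ \eta(\bar w)\end{pmatrix}$ in block form over $(A',A^c)$. Then $$\kappa(w):=E_{\pi_K}\sum_{j=0}^{T_K-1}w(X_j)=\pi_K\Big[w_1+P_{12}(I-P_{22})^{-1}w_2+P_{13}\eta(\bar w)+P_{12}(I-P_{22})^{-1}P_{23}\eta(\bar w)\Big].$$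
   Context: $P_x$ and $E_x$ denote probability and expectation for the chain started at $X_0=x$; for a distribution $\mu$, $E_\mu=\sum_x\mu(x)E_x$. $T_K=\inf\{n\ge1:X_n\in K\}$ is the return time to $K$. The matrix $P_K=(P_K(x,y):x,y\in K)$ with $P_K(x,y)=P_x(X_{T_K}=y)$ is the transition matrix of the chain watched only on $K$ (the censored chain); it is irreducible and $\pi_K$ denotes its unique stationary distribution (a row vector). Functions are column vectors and distributions row vectors; quantities may take the value $+\infty$. *)

theory Defs
  imports "HOL-Probability.Probability"
begin

definition stochastic :: "('a \<Rightarrow> 'a \<Rightarrow> real) \<Rightarrow> bool" where
  "stochastic P \<longleftrightarrow> (\<forall>x y. 0 \<le> P x y) \<and> (\<forall>x. ((\<lambda>y. P x y) has_sum 1) UNIV)"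

text \<open>M x with process X x is the Markov chain with transition matrix P started at x,
  i.e. its finite-dimensional distributions are the path probabilities.\<close>
definition markov_family ::
  "('a \<Rightarrow> 'w measure) \<Rightarrow> ('a \<Rightarrow> nat \<Rightarrow> 'w \<Rightarrow> 'a) \<Rightarrow> ('a \<Rightarrow> 'a \<Rightarrow> real) \<Rightarrow> bool" where
  "markov_family M X P \<longleftrightarrow>
     (\<forall>x. prob_space (M x)) \<and>
     (\<forall>x n. X x n \<in> measurable (M x) (count_space UNIV)) \<and>
     (\<forall>x n xs. length xs = Suc n \<longrightarrow>
        measure (M x) {\<omega> \<in> space (M x). \<forall>i\<le>n. X x i \<omega> = xs ! i}
        = (if xs ! 0 = x then (\<Prod>i<n. P (xs ! i) (xs ! Suc i)) else 0))"

definition ret_time :: "'a set \<Rightarrow> (nat \<Rightarrow> 'w \<Rightarrow> 'a) \<Rightarrow> 'w \<Rightarrow> enat" where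
  "ret_time K Y \<omega> = (if \<exists>n\<ge>1. Y n \<omega> \<in> K then enat (LEAST n. n \<ge> 1 \<and> Y n \<omega> \<in> K) else \<infinity>)"

definition irreducible_chain ::
  "('a \<Rightarrow> 'w measure) \<Rightarrow> ('a \<Rightarrow> nat \<Rightarrow> 'w \<Rightarrow> 'a) \<Rightarrow> bool" where
  "irreducible_chain M X \<longleftrightarrow>
     (\<forall>x y. \<exists>n. measure (M x) {\<omega> \<in> space (M x). X x n \<omega> = y} > 0)"

definition positive_recurrent ::
  "('a \<Rightarrow> 'w measure) \<Rightarrow> ('a \<Rightarrow> nat \<Rightarrow> 'w \<Rightarrow> 'a) \<Rightarrow> bool" where
  "positive_recurrent M X \<longleftrightarrow>
     (\<forall>x. (\<integral>\<^sup>+ \<omega>. ennreal_of_enat (ret_time {x} (X x) \<omega>) \<partial>M x) < \<infinity>)"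

definition censored ::
  "('a \<Rightarrow> 'w measure) \<Rightarrow> ('a \<Rightarrow> nat \<Rightarrow> 'w \<Rightarrow> 'a) \<Rightarrow> 'a set \<Rightarrow> 'a \<Rightarrow> 'a \<Rightarrow> real" where
  "censored M X K x y = measure (M x)
     {\<omega> \<in> space (M x). ret_time K (X x) \<omega> \<noteq> \<infinity> \<and> X x (the_enat (ret_time K (X x) \<omega>)) \<omega> = y}"

definition stationary_on :: "'a set \<Rightarrow> ('a \<Rightarrow> 'a \<Rightarrow> real) \<Rightarrow> ('a \<Rightarrow> real) \<Rightarrow> bool" where
  "stationary_on K Q \<mu> \<longleftrightarrow> (\<forall>x\<in>K. 0 \<le> \<mu> x) \<and> (\<Sum>x\<in>K. \<mu> x) = 1 \<and>
     (\<forall>y\<in>K. (\<Sum>x\<in>K. \<mu> x * Q x y) = \<mu> y)"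

definition kappa ::
  "('a \<Rightarrow> 'w measure) \<Rightarrow> ('a \<Rightarrow> nat \<Rightarrow> 'w \<Rightarrow> 'a) \<Rightarrow> 'a set \<Rightarrow> ('a \<Rightarrow> real) \<Rightarrow> ('a \<Rightarrow> real) \<Rightarrow> ennreal" where
  "kappa M X K \<mu> w = (\<Sum>x\<in>K. ennreal (\<mu> x) *
     (\<integral>\<^sup>+ \<omega>. (\<Sum>j. if enat j < ret_time K (X x) \<omega> then ennreal (w (X x j \<omega>)) else 0) \<partial>M x))"

definition inv_IminusP :: "'a set \<Rightarrow> ('a \<Rightarrow> 'a \<Rightarrow> real) \<Rightarrow> 'a \<Rightarrow> 'a \<Rightarrow> real" where
  "inv_IminusP A' P = (THE G. (\<forall>x y. (x \<notin> A' \<or> y \<notin> A') \<longrightarrow> G x y = 0) \<and>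
     (\<forall>x\<in>A'. \<forall>y\<in>A'. (\<Sum>z\<in>A'. G x z * ((if z = y then 1 else 0) - P z y)) = (if x = y then 1 else 0)) \<and>
     (\<forall>x\<in>A'. \<forall>y\<in>A'. (\<Sum>z\<in>A'. ((if x = z then 1 else 0) - P x z) * G z y) = (if x = y then 1 else 0)))"

primrec Bpow_w :: "'a set \<Rightarrow> ('a \<Rightarrow> 'a \<Rightarrow> real) \<Rightarrow> ('a \<Rightarrow> real) \<Rightarrow> nat \<Rightarrow> 'a \<Rightarrow> ennreal" where
  "Bpow_w K P w 0 x = ennreal (w x)"
| "Bpow_w K P w (Suc n) x = (\<Sum>\<^sub>\<infinity>z\<in>-K. ennreal (P x z) * Bpow_w K P w n z)"

text \<open>sum_{n\<ge>0} B^n wbar (components indexed by K^c; eta is its A^c block).\<close>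
definition eta_sum :: "'a set \<Rightarrow> ('a \<Rightarrow> 'a \<Rightarrow> real) \<Rightarrow> ('a \<Rightarrow> real) \<Rightarrow> 'a \<Rightarrow> ennreal" where
  "eta_sum K P w x = (\<Sum>n. Bpow_w K P w n x)"

end

theory Submission
  imports Defs
begin

lemma infsum_nn_count:
  fixes f :: "'a::countable \<Rightarrow> ennreal"
  shows "infsum f A = (\<integral>\<^sup>+x. f x \<partial>count_space A)"
proof (rule antisym)
  have "infsum f A = (SUP F\<in>{F. finite F \<and> F\<subseteq>A}. sum f F)"
    by (rule nonneg_infsum_complete) simp
  also have "\<dots> \<le> (\<integral>\<^sup>+x. f x \<partial>count_space A)"
  proof (rule SUP_least)
    fix F assume F: "F \<in> {F. finite F \<and> F\<subseteq>A}"
    have "sum f F = (\<integral>\<^sup>+x. f x * indicator F x \<partial>count_space A)"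
      using F by (subst nn_integral_count_space'[where A=F]) (auto intro!: sum.cong)
    also have "\<dots> \<le> (\<integral>\<^sup>+x. f x \<partial>count_space A)"
      by (intro nn_integral_mono) (auto split: split_indicator)
    finally show "sum f F \<le> (\<integral>\<^sup>+x. f x \<partial>count_space A)" .
  qed
  finally show "infsum f A \<le> (\<integral>\<^sup>+x. f x \<partial>count_space A)" .
next
  define F where "F n = {x\<in>A. to_nat x < n}" for n
  have finF: "finite (F n)" for n
  proof -
    have "F n \<subseteq> to_nat -` {..<n}" by (auto simp: F_def)
    moreover have "finite (to_nat -` {..<n} :: 'a set)"
      by (rule finite_vimageI) (auto simp: inj_on_def)
    ultimately show ?thesis by (rule finite_subset)
  qed
  have incF: "incseq (\<lambda>n x. f x * indicator (F n) x)"
    by (auto simp: incseq_def le_fun_def F_def split: split_indicator)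
  have "(\<integral>\<^sup>+x. f x \<partial>count_space A) = (\<integral>\<^sup>+x. (SUP n. f x * indicator (F n) x) \<partial>count_space A)"
  proof (intro nn_integral_cong)
    fix x assume "x \<in> space (count_space A)"
    then have xA: "x \<in> A" by simp
    show "f x = (SUP n. f x * indicator (F n) x)"
    proof (rule antisym)
      have "f x = f x * indicator (F (Suc (to_nat x))) x" using xA by (simp add: F_def)
      also have "\<dots> \<le> (SUP n. f x * indicator (F n) x)" by (rule SUP_upper) simp
      finally show "f x \<le> (SUP n. f x * indicator (F n) x)" .
    qed (auto intro!: SUP_least split: split_indicator)
  qed
  also have "\<dots> = (SUP n. (\<integral>\<^sup>+x. f x * indicator (F n) x \<partial>count_space A))"
    by (rule nn_integral_monotone_convergence_SUP) (use incF in auto)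
  also have "\<dots> \<le> infsum f A"
  proof (rule SUP_least)
    fix n
    have "(\<integral>\<^sup>+x. f x * indicator (F n) x \<partial>count_space A) = sum f (F n)"
      using finF by (subst nn_integral_count_space'[where A="F n"]) (auto intro!: sum.cong simp: F_def)
    also have "\<dots> = infsum f (F n)" using finF by simp
    also have "\<dots> \<le> infsum f A"
      by (rule infsum_mono_neutral) (auto simp: F_def intro: nonneg_summable_on_complete)
    finally show "(\<integral>\<^sup>+x. f x * indicator (F n) x \<partial>count_space A) \<le> infsum f A" .
  qed
  finally show "(\<integral>\<^sup>+x. f x \<partial>count_space A) \<le> infsum f A" .
qed

lemma ennreal_suminf_split_head:
  fixes f :: "nat \<Rightarrow> ennreal"
  shows "suminf f = f 0 + (\<Sum>n. f (Suc n))"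
proof -
  have "f sums ((\<Sum>n. f (Suc n)) + f 0)"
    by (rule sums_Suc) (rule summable_sums[OF summableI])
  then show ?thesis by (simp add: sums_unique[symmetric] add.commute)
qed

fun Wp :: "('a \<Rightarrow> 'a \<Rightarrow> real) \<Rightarrow> 'a \<Rightarrow> 'a list \<Rightarrow> real" where
  "Wp P x [] = 1" | "Wp P x (y#ys) = P x y * Wp P y ys"

definition Ypath :: "('a \<Rightarrow> nat \<Rightarrow> 'w \<Rightarrow> 'a) \<Rightarrow> 'a \<Rightarrow> nat \<Rightarrow> 'w \<Rightarrow> 'a list" where
  "Ypath X x n \<omega> = map (\<lambda>i. X x (Suc i) \<omega>) [0..<n]"

lemma Wp_nonneg: "(\<forall>x y. 0 \<le> P x y) \<Longrightarrow> 0 \<le> Wp P x ys"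
  by (induction ys arbitrary: x) auto

lemma prod_Wp: "(\<Prod>i<length ys. P ((x#ys)!i) ((x#ys)!Suc i)) = Wp P x ys"
  by (induction ys arbitrary: x) (simp_all del: prod.lessThan_Suc add: prod.lessThan_Suc_shift)

lemma mf_prob: "markov_family M X P \<Longrightarrow> prob_space (M x)"
  unfolding markov_family_def by auto

lemma mf_meas: "markov_family M X P \<Longrightarrow> X x n \<in> measurable (M x) (count_space UNIV)"
  unfolding markov_family_def by auto

lemma mf_cyl: "markov_family M X P \<Longrightarrow> length xs = Suc n \<Longrightarrow>
   measure (M x) {\<omega> \<in> space (M x). \<forall>i\<le>n. X x i \<omega> = xs ! i}
        = (if xs ! 0 = x then (\<Prod>i<n. P (xs ! i) (xs ! Suc i)) else 0)"
  unfolding markov_family_def by auto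

lemma mf_AE0:
  assumes mf: "markov_family M X P"
  shows "AE \<omega> in M x. X x 0 \<omega> = x"
proof -
  interpret prob_space "M x" using mf_prob[OF mf] .
  have "measure (M x) {\<omega>\<in>space (M x). \<forall>i\<le>0. X x i \<omega> = [x]!i} = 1"
    using mf_cyl[OF mf, of "[x]" 0 x] by simp
  then have "prob {\<omega>\<in>space (M x). X x 0 \<omega> = x} = 1" by simp
  from AE_prob_1[OF this] show ?thesis by eventually_elim auto
qed

lemma Ypath_set_meas:
  assumes mf: "markov_family M X P"
  shows "{\<omega>\<in>space (M x). Ypath X x n \<omega> = ys} \<in> sets (M x)"
proof -
  note [measurable] = mf_meas[OF mf]
  show ?thesis
  proof (cases "length ys = n")
    case True
    then have "{\<omega>\<in>space (M x). Ypath X x n \<omega> = ys} = {\<omega>\<in>space (M x). \<forall>i<n. X x (Suc i) \<omega> = ys!i}"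
      by (auto simp: Ypath_def list_eq_iff_nth_eq)
    also have "\<dots> \<in> sets (M x)" by measurable
    finally show ?thesis .
  next
    case False
    then have "{\<omega>\<in>space (M x). Ypath X x n \<omega> = ys} = {}"
      by (auto simp: Ypath_def)
    then show ?thesis by (metis sets.empty_sets)
  qed
qed

lemma Ypath_meas:
  fixes X :: "'a::countable \<Rightarrow> nat \<Rightarrow> 'w \<Rightarrow> 'a"
  assumes mf: "markov_family M X P"
  shows "Ypath X x n \<in> measurable (M x) (count_space UNIV)"
proof -
  have "\<forall>a\<in>UNIV. Ypath X x n -` {a} \<inter> space (M x) \<in> sets (M x)"
  proof
    fix a
    have "Ypath X x n -` {a} \<inter> space (M x) = {\<omega>\<in>space (M x). Ypath X x n \<omega> = a}" by auto
    then show "Ypath X x n -` {a} \<inter> space (M x) \<in> sets (M x)" using Ypath_set_meas[OF mf] by simp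
  qed
  then show ?thesis by (subst measurable_count_space_eq_countable) auto
qed

lemma Ypath_emeasure:
  assumes mf: "markov_family M X P" and len: "length ys = n"
  shows "emeasure (M x) {\<omega>\<in>space (M x). Ypath X x n \<omega> = ys} = ennreal (Wp P x ys)"
proof -
  interpret prob_space "M x" using mf_prob[OF mf] .
  note [measurable] = mf_meas[OF mf]
  let ?C = "{\<omega> \<in> space (M x). \<forall>i\<le>n. X x i \<omega> = (x#ys) ! i}"
  have C: "?C \<in> sets (M x)" by measurable
  have "emeasure (M x) {\<omega>\<in>space (M x). Ypath X x n \<omega> = ys} = emeasure (M x) ?C"
  proof (rule emeasure_eq_AE)
    show "AE \<omega> in M x. (\<omega> \<in> {\<omega>\<in>space (M x). Ypath X x n \<omega> = ys}) = (\<omega> \<in> ?C)"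
      using mf_AE0[OF mf, of x]
    proof eventually_elim
      case (elim \<omega>)
      have "Ypath X x n \<omega> = ys \<longleftrightarrow> (\<forall>i<n. X x (Suc i) \<omega> = ys!i)"
        using len by (auto simp: Ypath_def list_eq_iff_nth_eq)
      also have "\<dots> \<longleftrightarrow> (\<forall>i\<le>n. X x i \<omega> = (x#ys) ! i)"
      proof
        assume h: "\<forall>i<n. X x (Suc i) \<omega> = ys!i"
        show "\<forall>i\<le>n. X x i \<omega> = (x#ys) ! i"
        proof (intro allI impI)
          fix i assume "i \<le> n"
          then show "X x i \<omega> = (x#ys) ! i" using h elim by (cases i) auto
        qed
      next
        assume h: "\<forall>i\<le>n. X x i \<omega> = (x#ys) ! i"
        show "\<forall>i<n. X x (Suc i) \<omega> = ys!i"
          using h by (metis Suc_leI nth_Cons_Suc)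
      qed
      finally show ?case by auto
    qed
  qed (use Ypath_set_meas[OF mf] C in auto)
  also have "\<dots> = ennreal (measure (M x) ?C)" by (simp add: emeasure_eq_measure)
  also have "measure (M x) ?C = Wp P x ys"
    using mf_cyl[OF mf, of "x#ys" n x] len prod_Wp[of P x ys] by simp
  finally show ?thesis .
qed

lemma Ypath_integral:
  fixes X :: "'a::countable \<Rightarrow> nat \<Rightarrow> 'w \<Rightarrow> 'a"
  assumes mf: "markov_family M X P"
  shows "(\<integral>\<^sup>+\<omega>. g (Ypath X x n \<omega>) \<partial>M x) =
         (\<integral>\<^sup>+ys. g ys * ennreal (Wp P x ys) \<partial>count_space {ys. length ys = n})"
proof -
  let ?S = "\<lambda>ys. {\<omega>\<in>space (M x). Ypath X x n \<omega> = ys}"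
  have "(\<integral>\<^sup>+\<omega>. g (Ypath X x n \<omega>) \<partial>M x) =
        (\<integral>\<^sup>+\<omega>. (\<integral>\<^sup>+ys. g ys * indicator (?S ys) \<omega> \<partial>count_space UNIV) \<partial>M x)"
  proof (intro nn_integral_cong)
    fix \<omega> assume \<omega>: "\<omega> \<in> space (M x)"
    show "g (Ypath X x n \<omega>) = (\<integral>\<^sup>+ys. g ys * indicator (?S ys) \<omega> \<partial>count_space UNIV)"
      using \<omega> by (subst nn_integral_count_space'[where A="{Ypath X x n \<omega>}"]) (auto split: split_indicator)
  qed
  also have "\<dots> = (\<integral>\<^sup>+ys. (\<integral>\<^sup>+\<omega>. g ys * indicator (?S ys) \<omega> \<partial>M x) \<partial>count_space UNIV)"
    by (rule nn_integral_count_space_nn_integral) (auto intro!: borel_measurable_times_ennreal borel_measurable_indicator Ypath_set_meas[OF mf])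
  also have "\<dots> = (\<integral>\<^sup>+ys. g ys * emeasure (M x) (?S ys) \<partial>count_space UNIV)"
    by (intro nn_integral_cong nn_integral_cmult_indicator Ypath_set_meas[OF mf])
  also have "\<dots> = (\<integral>\<^sup>+ys. g ys * ennreal (Wp P x ys) * indicator {ys. length ys = n} ys \<partial>count_space UNIV)"
  proof (intro nn_integral_cong)
    fix ys :: "'a list"
    show "g ys * emeasure (M x) (?S ys) = g ys * ennreal (Wp P x ys) * indicator {ys. length ys = n} ys"
    proof (cases "length ys = n")
      case True then show ?thesis using Ypath_emeasure[OF mf True] by simp
    next
      case False
      then have e: "?S ys = {}" by (auto simp: Ypath_def)
      show ?thesis using False by (simp only: e emeasure_empty) simp
    qed
  qed
  also have "\<dots> = (\<integral>\<^sup>+ys. g ys * ennreal (Wp P x ys) \<partial>count_space {ys. length ys = n})"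
    by (simp add: nn_integral_count_space_indicator)
  finally show ?thesis .
qed

lemma list_integral_Suc:
  fixes f :: "'a::countable list \<Rightarrow> ennreal"
  shows "(\<integral>\<^sup>+ys. f ys \<partial>count_space {ys. length ys = Suc n}) =
         (\<integral>\<^sup>+y. (\<integral>\<^sup>+ys. f (y#ys) \<partial>count_space {ys. length ys = n}) \<partial>count_space UNIV)"
proof -
  let ?L = "\<lambda>n. {ys::'a list. length ys = n}"
  have "(\<integral>\<^sup>+ys. f ys \<partial>count_space (?L (Suc n))) = (\<integral>\<^sup>+l. f l * indicator (?L (Suc n)) l \<partial>count_space UNIV)"
    by (simp add: nn_integral_count_space_indicator)
  also have "\<dots> = (\<integral>\<^sup>+l. (\<integral>\<^sup>+y. f l * indicator (Cons y ` ?L n) l \<partial>count_space UNIV) \<partial>count_space UNIV)"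
  proof (intro nn_integral_cong)
    fix l :: "'a list"
    show "f l * indicator (?L (Suc n)) l = (\<integral>\<^sup>+y. f l * indicator (Cons y ` ?L n) l \<partial>count_space UNIV)"
    proof (cases "length l = Suc n")
      case True
      then obtain a t where l: "l = a # t" and t: "length t = n" by (cases l) auto
      show ?thesis using True
        by (subst nn_integral_count_space'[where A="{a}"]) (auto simp: l t split: split_indicator)
    next
      case False
      then have "l \<notin> Cons y ` ?L n" for y by auto
      then show ?thesis using False by (simp split: split_indicator)
    qed
  qed
  also have "\<dots> = (\<integral>\<^sup>+y. (\<integral>\<^sup>+l. f l * indicator (Cons y ` ?L n) l \<partial>count_space UNIV) \<partial>count_space UNIV)"
    by (rule nn_integral_count_space_nn_integral) auto
  also have "\<dots> = (\<integral>\<^sup>+y. (\<integral>\<^sup>+ys. f (y#ys) \<partial>count_space (?L n)) \<partial>count_space UNIV)"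
  proof (intro nn_integral_cong)
    fix y
    have "(\<integral>\<^sup>+l. f l * indicator (Cons y ` ?L n) l \<partial>count_space UNIV) = (\<integral>\<^sup>+l. f l \<partial>count_space (Cons y ` ?L n))"
      by (simp add: nn_integral_count_space_indicator)
    also have "\<dots> = (\<integral>\<^sup>+ys. f (y#ys) \<partial>count_space (?L n))"
      by (rule nn_integral_bij_count_space[symmetric]) (auto intro!: bij_betw_imageI inj_onI)
    finally show "(\<integral>\<^sup>+l. f l * indicator (Cons y ` ?L n) l \<partial>count_space UNIV) = (\<integral>\<^sup>+ys. f (y#ys) \<partial>count_space (?L n))" .
  qed
  finally show ?thesis .
qed

definition gK :: "'a set \<Rightarrow> ('a \<Rightarrow> real) \<Rightarrow> 'a \<Rightarrow> 'a list \<Rightarrow> ennreal" where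
  "gK K w y ys = (if set ys \<inter> K = {} then ennreal (w (last (y#ys))) else 0)"

lemma Bpow_Suc_nn:
  fixes P :: "'a::countable \<Rightarrow> 'a \<Rightarrow> real"
  shows "Bpow_w K P w (Suc n) x = (\<integral>\<^sup>+z. ennreal (P x z) * Bpow_w K P w n z \<partial>count_space (-K))"
  by (simp add: infsum_nn_count)

lemma gK_Bpow:
  fixes P :: "'a::countable \<Rightarrow> 'a \<Rightarrow> real"
  assumes Pnn: "\<forall>x y. 0 \<le> P x y"
  shows "(\<integral>\<^sup>+ys. gK K w y ys * ennreal (Wp P y ys) \<partial>count_space {ys. length ys = n}) = Bpow_w K P w n y"
proof (induction n arbitrary: y)
  case 0
  have "{ys::'a list. length ys = 0} = {[]}" by auto
  then show ?case by (simp add: nn_integral_count_space_finite gK_def)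
next
  case (Suc n)
  have "(\<integral>\<^sup>+ys. gK K w y ys * ennreal (Wp P y ys) \<partial>count_space {ys. length ys = Suc n}) =
     (\<integral>\<^sup>+z. (\<integral>\<^sup>+ys. gK K w y (z#ys) * ennreal (Wp P y (z#ys)) \<partial>count_space {ys. length ys = n}) \<partial>count_space UNIV)"
    by (rule list_integral_Suc)
  also have "\<dots> = (\<integral>\<^sup>+z. ennreal (P y z) * Bpow_w K P w n z * indicator (-K) z \<partial>count_space UNIV)"
  proof (intro nn_integral_cong)
    fix z
    show "(\<integral>\<^sup>+ys. gK K w y (z#ys) * ennreal (Wp P y (z#ys)) \<partial>count_space {ys. length ys = n}) =
          ennreal (P y z) * Bpow_w K P w n z * indicator (-K) z"
    proof (cases "z \<in> K")
      case True
      then show ?thesis by (simp add: gK_def)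
    next
      case False
      have "(\<integral>\<^sup>+ys. gK K w y (z#ys) * ennreal (Wp P y (z#ys)) \<partial>count_space {ys. length ys = n}) =
            (\<integral>\<^sup>+ys. ennreal (P y z) * (gK K w z ys * ennreal (Wp P z ys)) \<partial>count_space {ys. length ys = n})"
        using False Pnn Wp_nonneg[OF Pnn]
        by (intro nn_integral_cong) (simp add: gK_def ennreal_mult mult_ac)
      also have "\<dots> = ennreal (P y z) * Bpow_w K P w n z"
        by (subst nn_integral_cmult) (simp_all add: Suc.IH)
      finally show ?thesis using False by simp
    qed
  qed
  also have "\<dots> = Bpow_w K P w (Suc n) y"
    by (subst Bpow_Suc_nn) (simp add: nn_integral_count_space_indicator)
  finally show ?case .
qed

lemma ret_lt: "(enat j < ret_time K Y \<omega>) \<longleftrightarrow> (\<forall>i<j. Y (Suc i) \<omega> \<notin> K)"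
proof (cases "\<exists>n\<ge>1. Y n \<omega> \<in> K")
  case True
  define L where "L = (LEAST n. n \<ge> 1 \<and> Y n \<omega> \<in> K)"
  have L: "L \<ge> 1 \<and> Y L \<omega> \<in> K" unfolding L_def using True by (rule LeastI_ex)
  have Lmin: "\<And>n. n \<ge> 1 \<Longrightarrow> Y n \<omega> \<in> K \<Longrightarrow> L \<le> n" unfolding L_def by (rule Least_le) simp
  have r: "ret_time K Y \<omega> = enat L" using True by (simp add: ret_time_def L_def)
  show ?thesis
  proof
    assume "enat j < ret_time K Y \<omega>"
    then have jL: "j < L" by (simp add: r)
    show "\<forall>i<j. Y (Suc i) \<omega> \<notin> K"
    proof (intro allI impI notI)
      fix i assume "i < j" "Y (Suc i) \<omega> \<in> K"
      then have "L \<le> Suc i" using Lmin by simp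
      then show False using \<open>i < j\<close> jL by simp
    qed
  next
    assume h: "\<forall>i<j. Y (Suc i) \<omega> \<notin> K"
    show "enat j < ret_time K Y \<omega>"
    proof (rule ccontr)
      assume "\<not> enat j < ret_time K Y \<omega>"
      then have "L \<le> j" by (simp add: r)
      then have "L - 1 < j" "Suc (L - 1) = L" using L by auto
      then show False using h L by metis
    qed
  qed
next
  case False
  then show ?thesis by (auto simp: ret_time_def)
qed

lemma last_Ypath: "X x 0 \<omega> = x \<Longrightarrow> last (x # Ypath X x n \<omega>) = X x n \<omega>"
  by (cases n) (auto simp: Ypath_def last_map)

lemma integrand_eq:
  assumes "X x 0 \<omega> = x"
  shows "(if enat j < ret_time K (X x) \<omega> then ennreal (w (X x j \<omega>)) else 0) = gK K w x (Ypath X x j \<omega>)"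
proof -
  have "set (Ypath X x j \<omega>) \<inter> K = {} \<longleftrightarrow> (\<forall>i<j. X x (Suc i) \<omega> \<notin> K)"
    by (force simp: Ypath_def disjoint_iff)
  then show ?thesis using ret_lt[of j K "X x" \<omega>] last_Ypath[of X x \<omega> j, OF assms]
    by (auto simp add: gK_def)
qed

lemma exp_eta:
  fixes X :: "'a::countable \<Rightarrow> nat \<Rightarrow> 'w \<Rightarrow> 'a"
  assumes mf: "markov_family M X P" and Pnn: "\<forall>x y. 0 \<le> P x y"
  shows "(\<integral>\<^sup>+\<omega>. (\<Sum>j. if enat j < ret_time K (X x) \<omega> then ennreal (w (X x j \<omega>)) else 0) \<partial>M x) = eta_sum K P w x"
proof -
  have "(\<integral>\<^sup>+\<omega>. (\<Sum>j. if enat j < ret_time K (X x) \<omega> then ennreal (w (X x j \<omega>)) else 0) \<partial>M x) =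
        (\<integral>\<^sup>+\<omega>. (\<Sum>j. gK K w x (Ypath X x j \<omega>)) \<partial>M x)"
    by (rule nn_integral_cong_AE) (use mf_AE0[OF mf, of x] in \<open>eventually_elim, simp add: integrand_eq\<close>)
  also have "\<dots> = (\<Sum>j. (\<integral>\<^sup>+\<omega>. gK K w x (Ypath X x j \<omega>) \<partial>M x))"
    by (rule nn_integral_suminf) (auto intro!: measurable_compose[OF Ypath_meas[OF mf]])
  also have "\<dots> = (\<Sum>j. Bpow_w K P w j x)"
    by (simp add: Ypath_integral[OF mf] gK_Bpow[OF Pnn])
  finally show ?thesis by (simp add: eta_sum_def)
qed

lemma kappa_eta:
  fixes X :: "'a::countable \<Rightarrow> nat \<Rightarrow> 'w \<Rightarrow> 'a"
  assumes mf: "markov_family M X P" and Pnn: "\<forall>x y. 0 \<le> P x y"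
  shows "kappa M X K \<mu> w = (\<Sum>x\<in>K. ennreal (\<mu> x) * eta_sum K P w x)"
  unfolding kappa_def using exp_eta[OF mf Pnn] by simp

lemma pos_path:
  fixes X :: "'a::countable \<Rightarrow> nat \<Rightarrow> 'w \<Rightarrow> 'a"
  assumes mf: "markov_family M X P" and Pnn: "\<forall>x y. 0 \<le> P x y"
    and pos: "measure (M y) {\<omega>\<in>space (M y). X y n \<omega> = k} > 0"
  shows "\<exists>l. length l = n \<and> last (y#l) = k \<and> Wp P y l > 0"
proof (rule ccontr)
  assume "\<not> ?thesis"
  then have zero: "\<And>l. length l = n \<Longrightarrow> last (y#l) = k \<Longrightarrow> Wp P y l = 0"
    using Wp_nonneg[OF Pnn] by (metis less_eq_real_def)
  interpret prob_space "M y" using mf_prob[OF mf] .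
  note [measurable] = mf_meas[OF mf]
  let ?S = "{l. last (y#l) = k}"
  let ?E = "Ypath X y n -` ?S \<inter> space (M y)"
  have E: "?E \<in> sets (M y)" by (rule measurable_sets[OF Ypath_meas[OF mf]]) simp
  have "emeasure (M y) {\<omega>\<in>space (M y). X y n \<omega> = k} \<le> emeasure (M y) ?E"
  proof (rule emeasure_mono_AE[OF _ E])
    show "AE \<omega> in M y. \<omega> \<in> {\<omega>\<in>space (M y). X y n \<omega> = k} \<longrightarrow> \<omega> \<in> ?E"
      using mf_AE0[OF mf, of y]
    proof eventually_elim
      case (elim \<omega>)
      show ?case using last_Ypath[of X y \<omega> n, OF elim] by auto
    qed
  qed
  also have "emeasure (M y) ?E = (\<integral>\<^sup>+\<omega>. indicator ?S (Ypath X y n \<omega>) \<partial>M y)"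
    by (subst nn_integral_indicator[OF E, symmetric]) (auto intro!: nn_integral_cong split: split_indicator)
  also have "\<dots> = (\<integral>\<^sup>+l. indicator ?S l * ennreal (Wp P y l) \<partial>count_space {l. length l = n})"
    by (rule Ypath_integral[OF mf])
  also have "\<dots> = 0"
  proof -
    have "(\<integral>\<^sup>+l. indicator ?S l * ennreal (Wp P y l) \<partial>count_space {l. length l = n}) = (\<integral>\<^sup>+l. 0 \<partial>count_space {l::'a list. length l = n})"
      by (rule nn_integral_cong) (auto simp: zero split: split_indicator)
    then show ?thesis by simp
  qed
  finally have "emeasure (M y) {\<omega>\<in>space (M y). X y n \<omega> = k} = 0" by simp
  then have "measure (M y) {\<omega>\<in>space (M y). X y n \<omega> = k} = 0" by (simp add: measure_def)
  with pos show False by simp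
qed

fun mpw :: "'a set \<Rightarrow> ('a \<Rightarrow> 'a \<Rightarrow> real) \<Rightarrow> nat \<Rightarrow> 'a \<Rightarrow> 'a \<Rightarrow> real" where
  "mpw A P 0 y z = (if y = z then 1 else 0)"
| "mpw A P (Suc k) y z = (\<Sum>t\<in>A. P y t * mpw A P k t z)"

definition rs :: "'a set \<Rightarrow> ('a \<Rightarrow> 'a \<Rightarrow> real) \<Rightarrow> nat \<Rightarrow> 'a \<Rightarrow> real" where
  "rs A P k y = (\<Sum>z\<in>A. mpw A P k y z)"

lemma stoch_nn: "stochastic P \<Longrightarrow> 0 \<le> P x y"
  unfolding stochastic_def by auto

lemma stoch_le1:
  assumes st: "stochastic P" and F: "finite F"
  shows "(\<Sum>t\<in>F. P y t) \<le> 1"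
proof -
  have hs: "((\<lambda>t. P y t) has_sum 1) UNIV" using st unfolding stochastic_def by auto
  have "(\<Sum>t\<in>F. P y t) = infsum (\<lambda>t. P y t) F" using F by simp
  also have "\<dots> \<le> infsum (\<lambda>t. P y t) UNIV"
  proof (rule infsum_mono_neutral)
    show "(\<lambda>t. P y t) summable_on F" using F by simp
    show "(\<lambda>t. P y t) summable_on UNIV" using hs by (auto simp: summable_on_def)
  qed (use stoch_nn[OF st] in auto)
  also have "\<dots> = 1" using hs by (rule infsumI)
  finally show ?thesis .
qed

lemma stoch_le1':
  assumes st: "stochastic P" and F: "finite F" and z: "z \<notin> F"
  shows "(\<Sum>t\<in>F. P y t) + P y z \<le> 1"
  using stoch_le1[OF st, of "insert z F" y] F z by (simp add: add.commute)

lemma mpw_nonneg: assumes st: "stochastic P" shows "0 \<le> mpw A P k y z"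
  using stoch_nn[OF st] by (induction k arbitrary: y) (auto intro!: sum_nonneg mult_nonneg_nonneg)

lemma dL1: "finite A \<Longrightarrow> y \<in> A \<Longrightarrow> (\<Sum>t\<in>A. (if y = t then 1 else 0) * f t) = (f y :: 'b::comm_semiring_1)"
proof -
  assume "finite A" "y \<in> A"
  have "(\<Sum>t\<in>A. (if y = t then 1 else 0) * f t) = (\<Sum>t\<in>A. if y = t then f t else 0)" by (rule sum.cong) auto
  then show ?thesis using \<open>finite A\<close> \<open>y \<in> A\<close> by (simp add: sum.delta')
qed

lemma dL2: "finite A \<Longrightarrow> y \<in> A \<Longrightarrow> (\<Sum>t\<in>A. (if t = y then 1 else 0) * f t) = (f y :: 'b::comm_semiring_1)"
  using dL1[of A y f] by (simp add: eq_commute)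

lemma dR1: "finite A \<Longrightarrow> y \<in> A \<Longrightarrow> (\<Sum>t\<in>A. f t * (if y = t then 1 else 0)) = (f y :: 'b::comm_semiring_1)"
  using dL1[of A y f] by (simp add: mult.commute)

lemma dR2: "finite A \<Longrightarrow> y \<in> A \<Longrightarrow> (\<Sum>t\<in>A. f t * (if t = y then 1 else 0)) = (f y :: 'b::comm_semiring_1)"
  using dL2[of A y f] by (simp add: mult.commute)

lemma mpw_add:
  assumes "finite A" "y \<in> A"
  shows "mpw A P (a+b) y z = (\<Sum>t\<in>A. mpw A P a y t * mpw A P b t z)"
  using assms(2)
proof (induction a arbitrary: y)
  case 0
  then show ?case using dL1[OF assms(1) 0, of "\<lambda>t. mpw A P b t z"] by simp
next
  case (Suc a)
  have "mpw A P (Suc a + b) y z = (\<Sum>t\<in>A. P y t * mpw A P (a+b) t z)" by simp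
  also have "\<dots> = (\<Sum>t\<in>A. P y t * (\<Sum>s\<in>A. mpw A P a t s * mpw A P b s z))"
    using Suc.IH by simp
  also have "\<dots> = (\<Sum>t\<in>A. \<Sum>s\<in>A. P y t * mpw A P a t s * mpw A P b s z)"
    by (simp add: sum_distrib_left mult.assoc)
  also have "\<dots> = (\<Sum>s\<in>A. \<Sum>t\<in>A. P y t * mpw A P a t s * mpw A P b s z)"
    by (rule sum.swap)
  also have "\<dots> = (\<Sum>s\<in>A. (\<Sum>t\<in>A. P y t * mpw A P a t s) * mpw A P b s z)"
    by (simp add: sum_distrib_right)
  finally show ?case by simp
qed

lemma mpw_1: assumes "finite A" "z \<in> A" shows "mpw A P 1 t z = P t z"
  using dR2[OF assms, of "P t"] by simp

lemma mpw_Suc_right: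
  assumes "finite A" "y \<in> A" "z \<in> A"
  shows "mpw A P (Suc k) y z = (\<Sum>t\<in>A. mpw A P k y t * P t z)"
  using mpw_add[OF assms(1,2), of P k 1 z] mpw_1[OF assms(1,3)] by simp

lemma rs_Suc:
  assumes "finite A"
  shows "rs A P (Suc k) y = (\<Sum>t\<in>A. P y t * rs A P k t)"
proof -
  have "rs A P (Suc k) y = (\<Sum>z\<in>A. \<Sum>t\<in>A. P y t * mpw A P k t z)" by (simp add: rs_def)
  also have "\<dots> = (\<Sum>t\<in>A. \<Sum>z\<in>A. P y t * mpw A P k t z)" by (rule sum.swap)
  also have "\<dots> = (\<Sum>t\<in>A. P y t * rs A P k t)" by (simp add: rs_def sum_distrib_left)
  finally show ?thesis .
qed

lemma rs_nonneg: "stochastic P \<Longrightarrow> 0 \<le> rs A P k y"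
  unfolding rs_def by (auto intro!: sum_nonneg mpw_nonneg)

lemma rs_le1:
  assumes st: "stochastic P" and A: "finite A"
  shows "rs A P k y \<le> 1"
proof (induction k arbitrary: y)
  case 0
  show ?case using A by (simp add: rs_def)
next
  case (Suc k)
  have "rs A P (Suc k) y = (\<Sum>t\<in>A. P y t * rs A P k t)" by (rule rs_Suc[OF A])
  also have "\<dots> \<le> (\<Sum>t\<in>A. P y t)"
    by (intro sum_mono mult_right_le_one_le stoch_nn[OF st] rs_nonneg[OF st] Suc.IH)
  also have "\<dots> \<le> 1" by (rule stoch_le1[OF st A])
  finally show ?case .
qed

lemma rs_add:
  assumes "finite A" "y \<in> A"
  shows "rs A P (a + b) y = (\<Sum>t\<in>A. mpw A P a y t * rs A P b t)"
proof -
  have "rs A P (a + b) y = (\<Sum>z\<in>A. \<Sum>t\<in>A. mpw A P a y t * mpw A P b t z)" by (simp add: rs_def mpw_add[OF assms])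
  also have "\<dots> = (\<Sum>t\<in>A. \<Sum>z\<in>A. mpw A P a y t * mpw A P b t z)" by (rule sum.swap)
  also have "\<dots> = (\<Sum>t\<in>A. mpw A P a y t * rs A P b t)" by (simp add: rs_def sum_distrib_left)
  finally show ?thesis .
qed

lemma rs_Suc_le:
  assumes st: "stochastic P" and A: "finite A" and y: "y \<in> A"
  shows "rs A P (Suc k) y \<le> rs A P k y"
proof -
  have "rs A P (Suc k) y = rs A P (k + 1) y" by simp
  also have "\<dots> = (\<Sum>t\<in>A. mpw A P k y t * rs A P 1 t)" by (rule rs_add[OF A y])
  also have "\<dots> \<le> (\<Sum>t\<in>A. mpw A P k y t)"
    by (intro sum_mono mult_right_le_one_le mpw_nonneg[OF st] rs_nonneg[OF st] rs_le1[OF st A])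
  also have "\<dots> = rs A P k y" by (simp add: rs_def)
  finally show ?thesis .
qed

lemma rs_antimono:
  assumes st: "stochastic P" and A: "finite A" and y: "y \<in> A" and kk: "k \<le> k'"
  shows "rs A P k' y \<le> rs A P k y"
  using lift_Suc_antimono_le[of "\<lambda>k. rs A P k y", OF rs_Suc_le[OF st A y] kk] .

lemma leak:
  assumes st: "stochastic P" and A: "finite A"
  shows "y \<in> A \<Longrightarrow> Wp P y l > 0 \<Longrightarrow> last (y#l) \<notin> A \<Longrightarrow> rs A P (length l) y < 1"
proof (induction l arbitrary: y)
  case Nil
  then show ?case by simp
next
  case (Cons z l)
  have Pnn: "\<forall>x y. 0 \<le> P x y" using stoch_nn[OF st] by auto
  have pos: "P y z * Wp P z l > 0" using Cons.prems by simp
  have Pyz: "P y z > 0" and Wz: "Wp P z l > 0"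
    using pos Pnn Wp_nonneg[OF Pnn, of z l]
    by (metis less_eq_real_def mult_eq_0_iff zero_less_mult_pos)+
  have eq: "rs A P (length (z#l)) y = (\<Sum>t\<in>A. P y t * rs A P (length l) t)"
    by (simp add: rs_Suc[OF A])
  show ?case
  proof (cases "z \<in> A")
    case False
    have "(\<Sum>t\<in>A. P y t * rs A P (length l) t) \<le> (\<Sum>t\<in>A. P y t)"
      by (intro sum_mono mult_right_le_one_le stoch_nn[OF st] rs_nonneg[OF st] rs_le1[OF st A])
    also have "\<dots> \<le> 1 - P y z" using stoch_le1'[OF st A False, of y] by simp
    finally show ?thesis using eq Pyz by simp
  next
    case True
    have "last (z#l) \<notin> A" using Cons.prems(3) by simp
    then have IH: "rs A P (length l) z < 1" using Cons.IH[OF True Wz] by simp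
    have "(\<Sum>t\<in>A. P y t * rs A P (length l) t) = P y z * rs A P (length l) z + (\<Sum>t\<in>A-{z}. P y t * rs A P (length l) t)"
      using A True by (simp add: sum.remove)
    also have "\<dots> \<le> P y z * rs A P (length l) z + (\<Sum>t\<in>A-{z}. P y t)"
      by (intro add_left_mono sum_mono mult_right_le_one_le stoch_nn[OF st] rs_nonneg[OF st] rs_le1[OF st A])
    also have "\<dots> < 1"
    proof -
      have "(\<Sum>t\<in>A-{z}. P y t) + P y z \<le> 1" using stoch_le1'[OF st _, of "A-{z}" z y] A by simp
      moreover have "P y z * rs A P (length l) z < P y z" using IH Pyz by simp
      ultimately show ?thesis by linarith
    qed
    finally show ?thesis using eq by simp
  qed
qed

lemma summable_mpw:
  assumes st: "stochastic P" and A: "finite A" and lk: "\<forall>y\<in>A. \<exists>n. rs A P n y < 1"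
    and y: "y \<in> A" and z: "z \<in> A"
  shows "summable (\<lambda>k. mpw A P k y z)"
proof -
  obtain nf where nf: "\<forall>y\<in>A. rs A P (nf y) y < 1" using lk by metis
  define N where "N = Max (insert 1 (nf ` A))"
  have N1: "N \<ge> 1" using A by (simp add: N_def)
  have nfN: "nf y \<le> N" if "y \<in> A" for y using A that by (simp add: N_def)
  have rN: "rs A P N y < 1" if "y \<in> A" for y
    using rs_antimono[OF st A that nfN[OF that]] nf that by fastforce
  define \<theta> where "\<theta> = Max (insert (1/2) ((\<lambda>y. rs A P N y) ` A))"
  have th1: "\<theta> < 1" using A rN by (simp add: \<theta>_def)
  have th0: "\<theta> \<ge> 1/2" unfolding \<theta>_def using A by (intro Max_ge) auto
  have rth: "rs A P N y \<le> \<theta>" if "y \<in> A" for y using A that by (simp add: \<theta>_def)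
  have decay: "\<forall>y\<in>A. rs A P (q*N+s) y \<le> \<theta>^q" for q s
  proof (induction q)
    case 0
    then show ?case using rs_le1[OF st A] by simp
  next
    case (Suc q)
    show ?case
    proof
      fix y assume y: "y \<in> A"
      have "rs A P (Suc q * N + s) y = rs A P (N + (q*N+s)) y" by (simp add: add.assoc)
      also have "\<dots> = (\<Sum>t\<in>A. mpw A P N y t * rs A P (q*N+s) t)" by (rule rs_add[OF A y])
      also have "\<dots> \<le> (\<Sum>t\<in>A. mpw A P N y t * \<theta>^q)"
        using Suc.IH by (intro sum_mono mult_left_mono mpw_nonneg[OF st]) auto
      also have "\<dots> = rs A P N y * \<theta>^q" by (simp add: rs_def sum_distrib_right)
      also have "\<dots> \<le> \<theta> * \<theta>^q" using rth[OF y] th0 by (intro mult_right_mono) auto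
      finally show "rs A P (Suc q * N + s) y \<le> \<theta>^Suc q" by simp
    qed
  qed
  define \<rho> where "\<rho> = root N \<theta>"
  have rho0: "0 < \<rho>" using N1 th0 by (simp add: \<rho>_def)
  have rho1: "\<rho> < 1" using N1 th1 by (simp add: \<rho>_def)
  have rhoN: "\<rho>^N = \<theta>" using N1 th0 by (simp add: \<rho>_def)
  have bound: "norm (mpw A P k y z) \<le> \<rho>^k / \<theta>" for k
  proof -
    have "mpw A P k y z \<le> rs A P k y"
      unfolding rs_def using A z by (intro member_le_sum mpw_nonneg[OF st]) auto
    also have "\<dots> = rs A P ((k div N) * N + k mod N) y" by simp
    also have "\<dots> \<le> \<theta>^(k div N)" using decay y by blast
    finally have a: "mpw A P k y z \<le> \<theta>^(k div N)" .
    have "\<theta>^(k div N) * \<theta> \<le> \<theta>^(k div N) * \<rho>^(k mod N)"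
    proof (intro mult_left_mono)
      have "\<rho>^N \<le> \<rho>^(k mod N)" using N1 rho0 rho1 by (intro power_decreasing) auto
      then show "\<theta> \<le> \<rho>^(k mod N)" using rhoN by simp
    qed (use th0 in auto)
    also have "\<dots> = \<rho>^(N * (k div N)) * \<rho>^(k mod N)" by (simp add: power_mult rhoN)
    also have "\<dots> = \<rho>^k" by (simp add: power_add[symmetric])
    finally have "\<theta>^(k div N) \<le> \<rho>^k / \<theta>" using th0 by (simp add: field_simps)
    then show ?thesis using a mpw_nonneg[OF st] by simp
  qed
  show ?thesis
    by (rule summable_comparison_test'[OF _ bound]) (use rho0 rho1 in \<open>auto intro!: summable_divide summable_geometric\<close>)
qed

definition Gm :: "'a set \<Rightarrow> ('a \<Rightarrow> 'a \<Rightarrow> real) \<Rightarrow> 'a \<Rightarrow> 'a \<Rightarrow> real" where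
  "Gm A P y z = (\<Sum>k. mpw A P k y z)"

lemma Gm_nonneg: "stochastic P \<Longrightarrow> summable (\<lambda>k. mpw A P k y z) \<Longrightarrow> 0 \<le> Gm A P y z"
  unfolding Gm_def by (intro suminf_nonneg mpw_nonneg)

context
  fixes A :: "'a set" and P :: "'a \<Rightarrow> 'a \<Rightarrow> real"
  assumes st: "stochastic P" and A: "finite A"
    and S: "\<And>y z. y \<in> A \<Longrightarrow> z \<in> A \<Longrightarrow> summable (\<lambda>k. mpw A P k y z)"
begin

lemma Gm_split:
  assumes "y \<in> A" "y' \<in> A"
  shows "Gm A P y y' = (if y = y' then 1 else 0) + (\<Sum>k. mpw A P (Suc k) y y')"
  using suminf_split_head[OF S[OF assms]] by (simp add: Gm_def)

lemma G_right:
  assumes y: "y \<in> A" and y': "y' \<in> A"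
  shows "(\<Sum>z\<in>A. Gm A P y z * ((if z = y' then 1 else 0) - P z y')) = (if y = y' then 1 else 0)"
proof -
  have "(\<Sum>z\<in>A. Gm A P y z * ((if z = y' then 1 else 0) - P z y')) =
        (\<Sum>z\<in>A. Gm A P y z * (if z = y' then 1 else 0)) - (\<Sum>z\<in>A. Gm A P y z * P z y')"
    by (simp add: right_diff_distrib sum_subtractf)
  also have "(\<Sum>z\<in>A. Gm A P y z * (if z = y' then 1 else 0)) = Gm A P y y'"
    by (rule dR2[OF A y'])
  also have "(\<Sum>z\<in>A. Gm A P y z * P z y') = (\<Sum>z\<in>A. \<Sum>k. mpw A P k y z * P z y')"
    unfolding Gm_def using S[OF y] by (intro sum.cong refl suminf_mult2) auto
  also have "\<dots> = (\<Sum>k. \<Sum>z\<in>A. mpw A P k y z * P z y')"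
    by (rule suminf_sum[symmetric]) (use S[OF y] in \<open>auto intro: summable_mult2\<close>)
  also have "\<dots> = (\<Sum>k. mpw A P (Suc k) y y')"
    using mpw_Suc_right[OF A y y'] by simp
  finally show ?thesis using Gm_split[OF y y'] by simp
qed

lemma G_left:
  assumes y: "y \<in> A" and y': "y' \<in> A"
  shows "(\<Sum>z\<in>A. ((if y = z then 1 else 0) - P y z) * Gm A P z y') = (if y = y' then 1 else 0)"
proof -
  have "(\<Sum>z\<in>A. ((if y = z then 1 else 0) - P y z) * Gm A P z y') =
        (\<Sum>z\<in>A. (if y = z then 1 else 0) * Gm A P z y') - (\<Sum>z\<in>A. P y z * Gm A P z y')"
    by (simp add: left_diff_distrib sum_subtractf)
  also have "(\<Sum>z\<in>A. (if y = z then 1 else 0) * Gm A P z y') = Gm A P y y'"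
    by (rule dL1[OF A y, of "\<lambda>z. Gm A P z y'"])
  also have "(\<Sum>z\<in>A. P y z * Gm A P z y') = (\<Sum>z\<in>A. \<Sum>k. P y z * mpw A P k z y')"
    unfolding Gm_def using S y' by (intro sum.cong refl suminf_mult[symmetric]) auto
  also have "\<dots> = (\<Sum>k. \<Sum>z\<in>A. P y z * mpw A P k z y')"
    by (rule suminf_sum[symmetric]) (use S y' in \<open>auto intro: summable_mult\<close>)
  also have "\<dots> = (\<Sum>k. mpw A P (Suc k) y y')"
    by simp
  finally show ?thesis using Gm_split[OF y y'] by simp
qed

lemma inv_eq:
  "inv_IminusP A P = (\<lambda>x y. if x \<in> A \<and> y \<in> A then Gm A P x y else 0)"
  (is "_ = ?G")
  unfolding inv_IminusP_def
proof (rule the_equality)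
  show "(\<forall>x y. (x \<notin> A \<or> y \<notin> A) \<longrightarrow> ?G x y = 0) \<and>
     (\<forall>x\<in>A. \<forall>y\<in>A. (\<Sum>z\<in>A. ?G x z * ((if z = y then 1 else 0) - P z y)) = (if x = y then 1 else 0)) \<and>
     (\<forall>x\<in>A. \<forall>y\<in>A. (\<Sum>z\<in>A. ((if x = z then 1 else 0) - P x z) * ?G z y) = (if x = y then 1 else 0))"
  proof (intro conjI ballI allI impI)
    fix x y assume "x \<in> A" "y \<in> A"
    then show "(\<Sum>z\<in>A. ?G x z * ((if z = y then 1 else 0) - P z y)) = (if x = y then 1 else 0)"
      using G_right[of x y] by (simp cong: sum.cong)
  next
    fix x y assume "x \<in> A" "y \<in> A"
    then show "(\<Sum>z\<in>A. ((if x = z then 1 else 0) - P x z) * ?G z y) = (if x = y then 1 else 0)"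
      using G_left[of x y] by (simp cong: sum.cong)
  qed auto
next
  fix G' assume h: "(\<forall>x y. (x \<notin> A \<or> y \<notin> A) \<longrightarrow> G' x y = 0) \<and>
     (\<forall>x\<in>A. \<forall>y\<in>A. (\<Sum>z\<in>A. G' x z * ((if z = y then 1 else 0) - P z y)) = (if x = y then 1 else 0)) \<and>
     (\<forall>x\<in>A. \<forall>y\<in>A. (\<Sum>z\<in>A. ((if x = z then 1 else 0) - P x z) * G' z y) = (if x = y then 1 else 0))"
  show "G' = ?G"
  proof (intro ext)
    fix x y
    show "G' x y = ?G x y"
    proof (cases "x \<in> A \<and> y \<in> A")
      case False then show ?thesis using h by auto
    next
      case True
      then have x: "x \<in> A" and y: "y \<in> A" by auto
      have "G' x y = (\<Sum>z\<in>A. G' x z * (if z = y then 1 else 0))"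
        by (rule dR2[OF A y, symmetric])
      also have "\<dots> = (\<Sum>z\<in>A. G' x z * (\<Sum>t\<in>A. ((if z = t then 1 else 0) - P z t) * Gm A P t y))"
        using G_left y by (intro sum.cong refl) auto
      also have "\<dots> = (\<Sum>z\<in>A. \<Sum>t\<in>A. G' x z * ((if z = t then 1 else 0) - P z t) * Gm A P t y)"
        by (simp add: sum_distrib_left mult.assoc)
      also have "\<dots> = (\<Sum>t\<in>A. \<Sum>z\<in>A. G' x z * ((if z = t then 1 else 0) - P z t) * Gm A P t y)"
        by (rule sum.swap)
      also have "\<dots> = (\<Sum>t\<in>A. (\<Sum>z\<in>A. G' x z * ((if z = t then 1 else 0) - P z t)) * Gm A P t y)"
        by (simp add: sum_distrib_right)
      also have "\<dots> = (\<Sum>t\<in>A. (if x = t then 1 else 0) * Gm A P t y)"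
        using h x by (intro sum.cong refl) auto
      also have "\<dots> = Gm A P x y"
        by (rule dL1[OF A x, of "\<lambda>t. Gm A P t y"])
      finally show ?thesis using x y by simp
    qed
  qed
qed

end

lemma eta_rec:
  fixes P :: "'a::countable \<Rightarrow> 'a \<Rightarrow> real"
  shows "eta_sum K P w x = ennreal (w x) + (\<integral>\<^sup>+z. ennreal (P x z) * eta_sum K P w z \<partial>count_space (-K))"
proof -
  have "eta_sum K P w x = Bpow_w K P w 0 x + (\<Sum>n. Bpow_w K P w (Suc n) x)"
    unfolding eta_sum_def by (rule ennreal_suminf_split_head)
  also have "(\<Sum>n. Bpow_w K P w (Suc n) x) = (\<Sum>n. \<integral>\<^sup>+z. ennreal (P x z) * Bpow_w K P w n z \<partial>count_space (-K))"
    by (simp only: Bpow_Suc_nn)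
  also have "\<dots> = (\<integral>\<^sup>+z. (\<Sum>n. ennreal (P x z) * Bpow_w K P w n z) \<partial>count_space (-K))"
    by (rule nn_integral_suminf[symmetric]) simp
  also have "\<dots> = (\<integral>\<^sup>+z. ennreal (P x z) * eta_sum K P w z \<partial>count_space (-K))"
    by (simp add: eta_sum_def)
  finally show ?thesis by simp
qed

definition HH :: "'a set \<Rightarrow> ('a \<Rightarrow> 'a \<Rightarrow> real) \<Rightarrow> ('a \<Rightarrow> real) \<Rightarrow> nat \<Rightarrow> 'a \<Rightarrow> ennreal" where
  "HH K P w N x = (\<Sum>n<N. Bpow_w K P w n x)"

lemma HH_Suc:
  fixes P :: "'a::countable \<Rightarrow> 'a \<Rightarrow> real"
  shows "HH K P w (Suc N) x = ennreal (w x) + (\<integral>\<^sup>+z. ennreal (P x z) * HH K P w N z \<partial>count_space (-K))"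
proof -
  have "HH K P w (Suc N) x = Bpow_w K P w 0 x + (\<Sum>n<N. Bpow_w K P w (Suc n) x)"
    unfolding HH_def by (rule sum.lessThan_Suc_shift)
  also have "(\<Sum>n<N. Bpow_w K P w (Suc n) x) = (\<Sum>n<N. \<integral>\<^sup>+z. ennreal (P x z) * Bpow_w K P w n z \<partial>count_space (-K))"
    by (simp only: Bpow_Suc_nn)
  also have "\<dots> = (\<integral>\<^sup>+z. (\<Sum>n<N. ennreal (P x z) * Bpow_w K P w n z) \<partial>count_space (-K))"
    by (rule nn_integral_sum[symmetric]) simp
  also have "\<dots> = (\<integral>\<^sup>+z. ennreal (P x z) * HH K P w N z \<partial>count_space (-K))"
    by (simp add: HH_def sum_distrib_left)
  finally show ?thesis by simp
qed

lemma HH_0[simp]: "HH K P w 0 x = 0" by (simp add: HH_def)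

lemma eta_SUP: "eta_sum K P w x = (SUP N. HH K P w N x)"
  by (simp add: eta_sum_def HH_def suminf_eq_SUP)

lemma HH_le: "HH K P w N x \<le> eta_sum K P w x"
  unfolding eta_SUP by (rule SUP_upper) simp

lemma split_int:
  fixes f :: "'a::countable \<Rightarrow> ennreal"
  assumes KA: "K \<subseteq> A" and A: "finite A"
  shows "(\<integral>\<^sup>+z. f z \<partial>count_space (-K)) = (\<Sum>z\<in>A-K. f z) + (\<integral>\<^sup>+z. f z \<partial>count_space (-A))"
proof -
  have "(\<integral>\<^sup>+z. f z \<partial>count_space (-K)) = (\<integral>\<^sup>+z. f z * indicator (-K) z \<partial>count_space UNIV)"
    by (simp add: nn_integral_count_space_indicator)
  also have "\<dots> = (\<integral>\<^sup>+z. (f z * indicator (A-K) z + f z * indicator (-A) z) \<partial>count_space UNIV)"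
    using KA by (intro nn_integral_cong) (auto split: split_indicator)
  also have "\<dots> = (\<integral>\<^sup>+z. f z * indicator (A-K) z \<partial>count_space UNIV) + (\<integral>\<^sup>+z. f z * indicator (-A) z \<partial>count_space UNIV)"
    by (rule nn_integral_add) auto
  also have "(\<integral>\<^sup>+z. f z * indicator (A-K) z \<partial>count_space UNIV) = (\<integral>\<^sup>+z. f z \<partial>count_space (A-K))"
    by (simp add: nn_integral_count_space_indicator)
  also have "\<dots> = (\<Sum>z\<in>A-K. f z)" using A by (simp add: nn_integral_count_space_finite)
  also have "(\<integral>\<^sup>+z. f z * indicator (-A) z \<partial>count_space UNIV) = (\<integral>\<^sup>+z. f z \<partial>count_space (-A))"
    by (simp add: nn_integral_count_space_indicator)
  finally show ?thesis .
qed

definition cc :: "('a \<Rightarrow> 'a \<Rightarrow> real) \<Rightarrow> 'a set \<Rightarrow> 'a set \<Rightarrow> ('a \<Rightarrow> real) \<Rightarrow> 'a \<Rightarrow> ennreal" where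
  "cc P K A w z = (\<integral>\<^sup>+u. ennreal (P z u) * eta_sum K P w u \<partial>count_space (-A))"

definition aa :: "('a \<Rightarrow> 'a \<Rightarrow> real) \<Rightarrow> 'a set \<Rightarrow> 'a set \<Rightarrow> ('a \<Rightarrow> real) \<Rightarrow> 'a \<Rightarrow> ennreal" where
  "aa P K A w z = ennreal (w z) + cc P K A w z"

definition vv :: "('a \<Rightarrow> 'a \<Rightarrow> real) \<Rightarrow> 'a set \<Rightarrow> 'a set \<Rightarrow> ('a \<Rightarrow> real) \<Rightarrow> 'a \<Rightarrow> ennreal" where
  "vv P K A w y = (\<Sum>z\<in>A-K. ennreal (Gm (A-K) P y z) * aa P K A w z)"

lemma eta_rec2:
  fixes P :: "'a::countable \<Rightarrow> 'a \<Rightarrow> real"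
  assumes KA: "K \<subseteq> A" and A: "finite A"
  shows "eta_sum K P w y = aa P K A w y + (\<Sum>t\<in>A-K. ennreal (P y t) * eta_sum K P w t)"
  using eta_rec[of K P w y] split_int[OF KA A, of "\<lambda>z. ennreal (P y z) * eta_sum K P w z"]
  by (simp add: aa_def cc_def add_ac)

context
  fixes P :: "'a::countable \<Rightarrow> 'a \<Rightarrow> real" and K A :: "'a set" and w :: "'a \<Rightarrow> real"
  assumes st: "stochastic P" and KA: "K \<subseteq> A" and A: "finite A"
    and S: "\<And>y z. y \<in> A - K \<Longrightarrow> z \<in> A - K \<Longrightarrow> summable (\<lambda>k. mpw (A-K) P k y z)"
begin

lemma finA': "finite (A - K)" using A by simp

lemma Gnn: "y \<in> A - K \<Longrightarrow> z \<in> A - K \<Longrightarrow> 0 \<le> Gm (A-K) P y z"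
  by (rule Gm_nonneg[OF st S])

lemma Gm_rec:
  assumes y: "y \<in> A - K" and z: "z \<in> A - K"
  shows "Gm (A-K) P y z = (if y = z then 1 else 0) + (\<Sum>t\<in>A-K. P y t * Gm (A-K) P t z)"
proof -
  have "(\<Sum>t\<in>A-K. ((if y = t then 1 else 0) - P y t) * Gm (A-K) P t z) = (if y = z then 1 else 0)"
    by (rule G_left[OF st finA' S y z])
  moreover have "(\<Sum>t\<in>A-K. ((if y = t then 1 else 0) - P y t) * Gm (A-K) P t z) =
     (\<Sum>t\<in>A-K. (if y = t then 1 else 0) * Gm (A-K) P t z) - (\<Sum>t\<in>A-K. P y t * Gm (A-K) P t z)"
    by (simp add: left_diff_distrib sum_subtractf)
  moreover have "(\<Sum>t\<in>A-K. (if y = t then 1 else 0) * Gm (A-K) P t z) = Gm (A-K) P y z"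
    by (rule dL1[OF finA' y, of "\<lambda>t. Gm (A-K) P t z"])
  ultimately show ?thesis by linarith
qed

lemma Gm_rec_enn:
  assumes y: "y \<in> A - K" and z: "z \<in> A - K"
  shows "ennreal (Gm (A-K) P y z) = ennreal (if y = z then 1 else 0) + (\<Sum>t\<in>A-K. ennreal (P y t) * ennreal (Gm (A-K) P t z))"
proof -
  have nn: "0 \<le> (\<Sum>t\<in>A-K. P y t * Gm (A-K) P t z)"
    using stoch_nn[OF st] Gnn z by (intro sum_nonneg mult_nonneg_nonneg) auto
  have "ennreal (Gm (A-K) P y z) = ennreal ((if y = z then 1 else 0) + (\<Sum>t\<in>A-K. P y t * Gm (A-K) P t z))"
    by (subst Gm_rec[OF y z]) (rule refl)
  also have "\<dots> = ennreal (if y = z then 1 else 0) + ennreal (\<Sum>t\<in>A-K. P y t * Gm (A-K) P t z)"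
    by (rule ennreal_plus) (use nn in auto)
  also have "ennreal (\<Sum>t\<in>A-K. P y t * Gm (A-K) P t z) = (\<Sum>t\<in>A-K. ennreal (P y t * Gm (A-K) P t z))"
    using stoch_nn[OF st] Gnn z by (intro sum_ennreal[symmetric]) (auto intro!: mult_nonneg_nonneg)
  also have "\<dots> = (\<Sum>t\<in>A-K. ennreal (P y t) * ennreal (Gm (A-K) P t z))"
    using stoch_nn[OF st] Gnn z by (intro sum.cong refl ennreal_mult) auto
  finally show ?thesis .
qed

lemma vv_rec:
  assumes y: "y \<in> A - K"
  shows "vv P K A w y = aa P K A w y + (\<Sum>t\<in>A-K. ennreal (P y t) * vv P K A w t)"
proof -
  have "vv P K A w y = (\<Sum>z\<in>A-K. (ennreal (if y = z then 1 else 0) + (\<Sum>t\<in>A-K. ennreal (P y t) * ennreal (Gm (A-K) P t z))) * aa P K A w z)"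
    unfolding vv_def using Gm_rec_enn[OF y] by (intro sum.cong refl) auto
  also have "\<dots> = (\<Sum>z\<in>A-K. ennreal (if y = z then 1 else 0) * aa P K A w z) +
      (\<Sum>z\<in>A-K. \<Sum>t\<in>A-K. ennreal (P y t) * (ennreal (Gm (A-K) P t z) * aa P K A w z))"
    by (simp add: distrib_right sum.distrib sum_distrib_right mult.assoc)
  also have "(\<Sum>z\<in>A-K. ennreal (if y = z then 1 else 0) * aa P K A w z) = (\<Sum>z\<in>A-K. (if y = z then 1 else 0) * aa P K A w z)"
    by (intro sum.cong) auto
  also have "\<dots> = aa P K A w y"
    by (rule dL1[OF finA' y, of "aa P K A w"])
  also have "(\<Sum>z\<in>A-K. \<Sum>t\<in>A-K. ennreal (P y t) * (ennreal (Gm (A-K) P t z) * aa P K A w z)) =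
      (\<Sum>t\<in>A-K. \<Sum>z\<in>A-K. ennreal (P y t) * (ennreal (Gm (A-K) P t z) * aa P K A w z))"
    by (rule sum.swap)
  also have "\<dots> = (\<Sum>t\<in>A-K. ennreal (P y t) * vv P K A w t)"
    by (simp add: vv_def sum_distrib_left)
  finally show ?thesis .
qed

lemma eta_le_vv:
  assumes y: "y \<in> A - K"
  shows "eta_sum K P w y \<le> vv P K A w y"
proof -
  have "\<forall>y\<in>A-K. HH K P w N y \<le> vv P K A w y" for N
  proof (induction N)
    case 0 then show ?case by simp
  next
    case (Suc N)
    show ?case
    proof
      fix y assume y: "y \<in> A - K"
      have "HH K P w (Suc N) y = ennreal (w y) + ((\<Sum>t\<in>A-K. ennreal (P y t) * HH K P w N t) +
            (\<integral>\<^sup>+u. ennreal (P y u) * HH K P w N u \<partial>count_space (-A)))"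
        by (simp add: HH_Suc split_int[OF KA A])
      also have "\<dots> \<le> ennreal (w y) + ((\<Sum>t\<in>A-K. ennreal (P y t) * vv P K A w t) + cc P K A w y)"
        unfolding cc_def using Suc.IH
        by (intro add_left_mono add_mono sum_mono mult_left_mono nn_integral_mono HH_le) auto
      also have "\<dots> = vv P K A w y" using vv_rec[OF y] by (simp add: aa_def add_ac)
      finally show "HH K P w (Suc N) y \<le> vv P K A w y" .
    qed
  qed
  then show ?thesis unfolding eta_SUP using y by (auto intro!: SUP_least)
qed

lemma vv_le_eta:
  assumes y: "y \<in> A - K"
  shows "vv P K A w y \<le> eta_sum K P w y"
proof -
  let ?em = "\<lambda>k y z. ennreal (mpw (A-K) P k y z)"
  define UU where "UU N y = (\<Sum>k<N. \<Sum>z\<in>A-K. ?em k y z * aa P K A w z)" for N y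
  have em_Suc: "?em (Suc k) y z = (\<Sum>t\<in>A-K. ennreal (P y t) * ?em k t z)" for k y z
    using stoch_nn[OF st] mpw_nonneg[OF st]
    by (simp add: sum_ennreal[symmetric] ennreal_mult sum_nonneg del: sum_ennreal)
  have UU: "\<forall>y\<in>A-K. UU N y \<le> eta_sum K P w y" for N
  proof (induction N)
    case 0 then show ?case by (simp add: UU_def)
  next
    case (Suc N)
    show ?case
    proof
      fix y assume y: "y \<in> A - K"
      have "UU (Suc N) y = (\<Sum>z\<in>A-K. ?em 0 y z * aa P K A w z) + (\<Sum>k<N. \<Sum>z\<in>A-K. ?em (Suc k) y z * aa P K A w z)"
        unfolding UU_def by (rule sum.lessThan_Suc_shift)
      also have "(\<Sum>z\<in>A-K. ?em 0 y z * aa P K A w z) = (\<Sum>z\<in>A-K. (if y = z then 1 else 0) * aa P K A w z)"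
        by (intro sum.cong) auto
      also have "\<dots> = aa P K A w y"
        by (rule dL1[OF finA' y, of "aa P K A w"])
      also have "(\<Sum>k<N. \<Sum>z\<in>A-K. ?em (Suc k) y z * aa P K A w z) =
                 (\<Sum>k<N. \<Sum>z\<in>A-K. \<Sum>t\<in>A-K. ennreal (P y t) * (?em k t z * aa P K A w z))"
        by (simp only: em_Suc sum_distrib_right mult.assoc)
      also have "\<dots> = (\<Sum>k<N. \<Sum>t\<in>A-K. \<Sum>z\<in>A-K. ennreal (P y t) * (?em k t z * aa P K A w z))"
        by (intro sum.cong refl sum.swap)
      also have "\<dots> = (\<Sum>t\<in>A-K. \<Sum>k<N. \<Sum>z\<in>A-K. ennreal (P y t) * (?em k t z * aa P K A w z))"
        by (rule sum.swap)
      also have "\<dots> = (\<Sum>t\<in>A-K. ennreal (P y t) * UU N t)"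
        by (simp add: UU_def sum_distrib_left)
      also have "aa P K A w y + \<dots> \<le> aa P K A w y + (\<Sum>t\<in>A-K. ennreal (P y t) * eta_sum K P w t)"
        using Suc.IH by (intro add_left_mono sum_mono mult_left_mono) auto
      also have "\<dots> = eta_sum K P w y" by (rule eta_rec2[OF KA A, symmetric])
      finally show "UU (Suc N) y \<le> eta_sum K P w y" .
    qed
  qed
  have "vv P K A w y = (\<Sum>z\<in>A-K. (\<Sum>k. ?em k y z) * aa P K A w z)"
    unfolding vv_def using S[OF y] mpw_nonneg[OF st]
    by (intro sum.cong refl) (simp add: Gm_def suminf_ennreal2)
  also have "\<dots> = (\<Sum>z\<in>A-K. \<Sum>k. ?em k y z * aa P K A w z)"
    by simp
  also have "\<dots> = (\<Sum>k. \<Sum>z\<in>A-K. ?em k y z * aa P K A w z)"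
    by (rule suminf_sum[symmetric]) (rule summableI)
  also have "\<dots> = (SUP N. UU N y)"
    by (simp add: UU_def suminf_eq_SUP)
  also have "\<dots> \<le> eta_sum K P w y"
    using UU y by (auto intro!: SUP_least)
  finally show ?thesis .
qed

lemma vv_eq: "y \<in> A - K \<Longrightarrow> vv P K A w y = eta_sum K P w y"
  using eta_le_vv vv_le_eta by (blast intro: antisym)

end

theorem theorem2p1:
  fixes P :: "'a::countable \<Rightarrow> 'a \<Rightarrow> real"
    and M :: "'a \<Rightarrow> 'w measure" and X :: "'a \<Rightarrow> nat \<Rightarrow> 'w \<Rightarrow> 'a"
    and K A :: "'a set" and w piK :: "'a \<Rightarrow> real"
  assumes "stochastic P"
    and "markov_family M X P"
    and "irreducible_chain M X"
    and "positive_recurrent M X"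
    and "K \<subseteq> A" and "finite A" and "K \<noteq> {}"
    and "\<forall>x. 0 \<le> w x"
    and "stationary_on K (censored M X K) piK"
  shows "kappa M X K piK w =
    (\<Sum>x\<in>K. ennreal (piK x) *
       (ennreal (w x)
        + (\<Sum>y\<in>A - K. ennreal (P x y) *
              ennreal (\<Sum>z\<in>A - K. inv_IminusP (A - K) P y z * w z))
        + (\<Sum>\<^sub>\<infinity>u\<in>-A. ennreal (P x u) * eta_sum K P w u)
        + (\<Sum>y\<in>A - K. ennreal (P x y) *
              (\<Sum>z\<in>A - K. ennreal (inv_IminusP (A - K) P y z) *
                 (\<Sum>\<^sub>\<infinity>u\<in>-A. ennreal (P z u) * eta_sum K P w u)))))"
proof -
  note st = assms(1) and mf = assms(2) and irr = assms(3) and KA = assms(5) and finA = assms(6)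
    and Kne = assms(7) and wnn = assms(8)
  have Pnn: "\<forall>x y. 0 \<le> P x y" using stoch_nn[OF st] by auto
  have finA': "finite (A-K)" using finA by simp
  have lk: "\<forall>y\<in>A-K. \<exists>n. rs (A-K) P n y < 1"
  proof
    fix y assume y: "y \<in> A-K"
    obtain k where k: "k \<in> K" using Kne by auto
    obtain n where n: "measure (M y) {\<omega>\<in>space (M y). X y n \<omega> = k} > 0"
      using irr unfolding irreducible_chain_def by blast
    obtain l where l: "length l = n" "last (y#l) = k" "Wp P y l > 0"
      using pos_path[OF mf Pnn n] by blast
    have "rs (A-K) P (length l) y < 1" by (rule leak[OF st finA' y l(3)]) (use l(2) k in auto)
    then show "\<exists>n. rs (A-K) P n y < 1" by blast
  qed
  have S: "\<And>y z. y \<in> A-K \<Longrightarrow> z \<in> A-K \<Longrightarrow> summable (\<lambda>k. mpw (A-K) P k y z)"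
    using summable_mpw[OF st finA' lk] by blast
  have inv: "inv_IminusP (A-K) P = (\<lambda>x y. if x \<in> A-K \<and> y \<in> A-K then Gm (A-K) P x y else 0)"
    by (rule inv_eq[OF st finA' S])
  have Gnn: "\<And>y z. y\<in>A-K \<Longrightarrow> z\<in>A-K \<Longrightarrow> 0 \<le> Gm (A-K) P y z" using Gm_nonneg[OF st S] by blast
  have ccA: "\<And>z. (\<Sum>\<^sub>\<infinity>u\<in>-A. ennreal (P z u) * eta_sum K P w u) = cc P K A w z"
    by (simp add: cc_def infsum_nn_count)
  have inner: "ennreal (\<Sum>z\<in>A - K. inv_IminusP (A - K) P y z * w z) +
      (\<Sum>z\<in>A - K. ennreal (inv_IminusP (A - K) P y z) * cc P K A w z) = eta_sum K P w y"
    if y: "y \<in> A - K" for y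
  proof -
    have "ennreal (\<Sum>z\<in>A - K. inv_IminusP (A - K) P y z * w z) = ennreal (\<Sum>z\<in>A - K. Gm (A-K) P y z * w z)"
      using y by (simp add: inv)
    also have "\<dots> = (\<Sum>z\<in>A - K. ennreal (Gm (A-K) P y z * w z))"
      using Gnn y wnn by (intro sum_ennreal[symmetric]) (auto intro!: mult_nonneg_nonneg)
    also have "\<dots> = (\<Sum>z\<in>A - K. ennreal (Gm (A-K) P y z) * ennreal (w z))"
      using Gnn y wnn by (intro sum.cong refl ennreal_mult) auto
    finally have e1: "ennreal (\<Sum>z\<in>A - K. inv_IminusP (A - K) P y z * w z) = (\<Sum>z\<in>A - K. ennreal (Gm (A-K) P y z) * ennreal (w z))" .
    have e2: "(\<Sum>z\<in>A - K. ennreal (inv_IminusP (A - K) P y z) * cc P K A w z) = (\<Sum>z\<in>A - K. ennreal (Gm (A-K) P y z) * cc P K A w z)"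
      using y by (intro sum.cong refl) (simp add: inv)
    have "vv P K A w y = (\<Sum>z\<in>A - K. ennreal (Gm (A-K) P y z) * ennreal (w z)) + (\<Sum>z\<in>A - K. ennreal (Gm (A-K) P y z) * cc P K A w z)"
      by (simp add: vv_def aa_def distrib_left sum.distrib)
    then show ?thesis using e1 e2 vv_eq[OF st KA finA S y] by simp
  qed
  show ?thesis
    unfolding kappa_eta[OF mf Pnn]
  proof (intro sum.cong refl arg_cong2[where f="(*)"])
    fix x assume x: "x \<in> K"
    have "(\<Sum>y\<in>A - K. ennreal (P x y) * ennreal (\<Sum>z\<in>A - K. inv_IminusP (A - K) P y z * w z))
        + (\<Sum>y\<in>A - K. ennreal (P x y) * (\<Sum>z\<in>A - K. ennreal (inv_IminusP (A - K) P y z) * cc P K A w z))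
        = (\<Sum>y\<in>A - K. ennreal (P x y) * eta_sum K P w y)"
      by (simp add: sum.distrib[symmetric] distrib_left[symmetric] inner)
    then show "eta_sum K P w x = ennreal (w x)
        + (\<Sum>y\<in>A - K. ennreal (P x y) * ennreal (\<Sum>z\<in>A - K. inv_IminusP (A - K) P y z * w z))
        + (\<Sum>\<^sub>\<infinity>u\<in>-A. ennreal (P x u) * eta_sum K P w u)
        + (\<Sum>y\<in>A - K. ennreal (P x y) * (\<Sum>z\<in>A - K. ennreal (inv_IminusP (A - K) P y z) *
                 (\<Sum>\<^sub>\<infinity>u\<in>-A. ennreal (P z u) * eta_sum K P w u)))"
      using eta_rec2[OF KA finA, of P w x] by (simp only: ccA aa_def) (simp add: add_ac)
  qed
qed

end
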